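(* Let $R$ be a Bezout domain satisfying the Dubrovin–Komarnytsky (D-K) condition. If $a,b\in R$ satisfy $RaR=R$ and $RbR=R$, then $RabR=R$.
   Context: All rings are associative with nonzero identity. A Bezout domain is a domain in which every finitely generated right ideal and every finitely generated left ideal is principal. For $x\in R$, $RxR$ denotes the two-sided ideal generated by $x$. A nonzero element $a$ is invariant if $aR=Ra$. $R$ satisfies the Dubrovin condition if for every $a\in R$ there is $a_*\in R$ with $RaR=a_*R=Ra_*$. A domain $R$ satisfies the Komarnytsky condition if whenever $a$ is invariant and $a=bc$ with $b,c\in R$, both $b$ and $c$ are invariant. The D-K condition means that both the Dubrovin and the Komarnytsky conditions hold. *)

theory Defs
  imports Main
begin

definition right_ideal :: "'a::ring_1 set \<Rightarrow> bool" where
  "right_ideal I \<longleftrightarrow> 0 \<in> I \<and> (\<forall>x\<in>I. \<forall>y\<in>I. x + y \<in> I) \<and> (\<forall>x\<in>I. - x \<in> I)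
     \<and> (\<forall>x\<in>I. \<forall>r. x * r \<in> I)"

definition left_ideal :: "'a::ring_1 set \<Rightarrow> bool" where
  "left_ideal I \<longleftrightarrow> 0 \<in> I \<and> (\<forall>x\<in>I. \<forall>y\<in>I. x + y \<in> I) \<and> (\<forall>x\<in>I. - x \<in> I)
     \<and> (\<forall>x\<in>I. \<forall>r. r * x \<in> I)"

definition two_sided_ideal :: "'a::ring_1 set \<Rightarrow> bool" where
  "two_sided_ideal I \<longleftrightarrow> right_ideal I \<and> left_ideal I"

definition right_ideal_gen :: "'a::ring_1 set \<Rightarrow> 'a set" where
  "right_ideal_gen S = \<Inter>{I. right_ideal I \<and> S \<subseteq> I}"

definition left_ideal_gen :: "'a::ring_1 set \<Rightarrow> 'a set" where
  "left_ideal_gen S = \<Inter>{I. left_ideal I \<and> S \<subseteq> I}"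

definition ideal_gen :: "'a::ring_1 \<Rightarrow> 'a set" where
  "ideal_gen x = \<Inter>{I. two_sided_ideal I \<and> x \<in> I}"

definition rprin :: "'a::ring_1 \<Rightarrow> 'a set" where
  "rprin a = {a * r | r. True}"

definition lprin :: "'a::ring_1 \<Rightarrow> 'a set" where
  "lprin a = {r * a | r. True}"

definition bezout_domain :: "'a::ring_1_no_zero_divisors itself \<Rightarrow> bool" where
  "bezout_domain _ \<longleftrightarrow>
     (\<forall>I::'a set. right_ideal I \<and> (\<exists>S. finite S \<and> I = right_ideal_gen S) \<longrightarrow> (\<exists>a. I = rprin a)) \<and>
     (\<forall>I::'a set. left_ideal I \<and> (\<exists>S. finite S \<and> I = left_ideal_gen S) \<longrightarrow> (\<exists>a. I = lprin a))"

definition invariant :: "'a::ring_1 \<Rightarrow> bool" where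
  "invariant a \<longleftrightarrow> a \<noteq> 0 \<and> rprin a = lprin a"

definition dubrovin :: "'a::ring_1 itself \<Rightarrow> bool" where
  "dubrovin _ \<longleftrightarrow> (\<forall>a::'a. \<exists>a'. ideal_gen a = rprin a' \<and> ideal_gen a = lprin a')"

definition komarnytsky :: "'a::ring_1 itself \<Rightarrow> bool" where
  "komarnytsky _ \<longleftrightarrow> (\<forall>a b c::'a. invariant a \<and> a = b * c \<longrightarrow> invariant b \<and> invariant c)"

definition DK_condition :: "'a::ring_1 itself \<Rightarrow> bool" where
  "DK_condition T \<longleftrightarrow> dubrovin T \<and> komarnytsky T"

end

theory Submission
  imports Defs
begin

lemma gen_sub: "two_sided_ideal I \<Longrightarrow> x \<in> I \<Longrightarrow> ideal_gen x \<subseteq> I"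
  unfolding ideal_gen_def by blast

lemma gen_mem: "x \<in> ideal_gen x"
  unfolding ideal_gen_def by blast

lemma rgen_sup: "S \<subseteq> right_ideal_gen S"
  unfolding right_ideal_gen_def by blast

lemma lgen_sup: "S \<subseteq> left_ideal_gen S"
  unfolding left_ideal_gen_def by blast

lemma inv_ideal:
  fixes c :: "'a::ring_1"
  assumes "invariant c" shows "two_sided_ideal (rprin c)"
proof -
  have e: "rprin c = lprin c" using assms invariant_def by blast
  have r: "right_ideal (rprin c)"
    unfolding right_ideal_def rprin_def
  proof (intro conjI ballI allI)
    show "0 \<in> {c * r |r. True}" by (rule CollectI, rule exI[of _ 0], simp)
  next
    fix x y assume "x \<in> {c * r |r. True}" "y \<in> {c * r |r. True}"
    then obtain r s where "x = c*r" "y = c*s" by auto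
    then show "x + y \<in> {c * r |r. True}" by (auto intro!: exI[of _ "r+s"] simp: distrib_left)
  next
    fix x assume "x \<in> {c * r |r. True}"
    then obtain r where "x = c*r" by auto
    then show "- x \<in> {c * r |r. True}" by (auto intro!: exI[of _ "-r"])
  next
    fix x t assume "x \<in> {c * r |r. True}"
    then obtain r where "x = c*r" by auto
    then show "x * t \<in> {c * r |r. True}" by (auto intro!: exI[of _ "r*t"] simp: mult.assoc)
  qed
  have l: "left_ideal (lprin c)"
    unfolding left_ideal_def lprin_def
  proof (intro conjI ballI allI)
    show "0 \<in> {r * c |r. True}" by (rule CollectI, rule exI[of _ 0], simp)
  next
    fix x y assume "x \<in> {r * c |r. True}" "y \<in> {r * c |r. True}"
    then obtain r s where "x = r*c" "y = s*c" by auto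
    then show "x + y \<in> {r * c |r. True}" by (auto intro!: exI[of _ "r+s"] simp: distrib_right)
  next
    fix x assume "x \<in> {r * c |r. True}"
    then obtain r where "x = r*c" by auto
    then show "- x \<in> {r * c |r. True}" by (auto intro!: exI[of _ "-r"])
  next
    fix x t assume "x \<in> {r * c |r. True}"
    then obtain r where "x = r*c" by auto
    then show "t * x \<in> {r * c |r. True}" by (auto intro!: exI[of _ "t*r"] simp: mult.assoc)
  qed
  with r e show ?thesis unfolding two_sided_ideal_def by simp
qed

lemma rgen_ideal: "right_ideal (right_ideal_gen S)"
  unfolding right_ideal_def right_ideal_gen_def by auto

lemma lgen_ideal: "left_ideal (left_ideal_gen S)"
  unfolding left_ideal_def left_ideal_gen_def by auto

lemma rgen_sub:
  fixes a c :: "'a::ring_1"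
  shows "right_ideal_gen {a, c} \<subseteq> {a*x + c*y | x y. True}"
proof -
  let ?J = "{a*x + c*y | x y. True}"
  have "right_ideal ?J"
    unfolding right_ideal_def
  proof (intro conjI ballI allI)
    show "0 \<in> ?J" by (auto intro!: exI[of _ 0])
  next
    fix u v assume "u \<in> ?J" "v \<in> ?J"
    then obtain x y x' y' where "u = a*x + c*y" "v = a*x' + c*y'" by auto
    then show "u + v \<in> ?J" by (intro CollectI exI[of _ "x+x'"] exI[of _ "y+y'"], simp add: algebra_simps)
  next
    fix u assume "u \<in> ?J"
    then obtain x y where "u = a*x + c*y" by auto
    then show "- u \<in> ?J" by (intro CollectI exI[of _ "-x"] exI[of _ "-y"], simp add: algebra_simps)
  next
    fix u t assume "u \<in> ?J"
    then obtain x y where "u = a*x + c*y" by auto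
    then show "u * t \<in> ?J" by (intro CollectI exI[of _ "x*t"] exI[of _ "y*t"], simp add: algebra_simps)
  qed
  moreover have "a \<in> ?J" by (intro CollectI exI[of _ 1] exI[of _ 0], simp)
  moreover have "c \<in> ?J" by (intro CollectI exI[of _ 0] exI[of _ 1], simp)
  ultimately show ?thesis unfolding right_ideal_gen_def by blast
qed

lemma lgen_sub:
  fixes a c :: "'a::ring_1"
  shows "left_ideal_gen {a, c} \<subseteq> {x*a + y*c | x y. True}"
proof -
  let ?J = "{x*a + y*c | x y. True}"
  have "left_ideal ?J"
    unfolding left_ideal_def
  proof (intro conjI ballI allI)
    show "0 \<in> ?J" by (auto intro!: exI[of _ 0])
  next
    fix u v assume "u \<in> ?J" "v \<in> ?J"
    then obtain x y x' y' where "u = x*a + y*c" "v = x'*a + y'*c" by auto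
    then show "u + v \<in> ?J" by (intro CollectI exI[of _ "x+x'"] exI[of _ "y+y'"], simp add: algebra_simps)
  next
    fix u assume "u \<in> ?J"
    then obtain x y where "u = x*a + y*c" by auto
    then show "- u \<in> ?J" by (intro CollectI exI[of _ "-x"] exI[of _ "-y"], simp add: algebra_simps)
  next
    fix u t assume "u \<in> ?J"
    then obtain x y where "u = x*a + y*c" by auto
    then show "t * u \<in> ?J" by (intro CollectI exI[of _ "t*x"] exI[of _ "t*y"], simp add: algebra_simps)
  qed
  moreover have "a \<in> ?J" by (intro CollectI exI[of _ 1] exI[of _ 0], simp)
  moreover have "c \<in> ?J" by (intro CollectI exI[of _ 0] exI[of _ 1], simp)
  ultimately show ?thesis unfolding left_ideal_gen_def by blast
qed
theorem proposition3p4: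
  fixes a b :: "'a::ring_1_no_zero_divisors"
  assumes "bezout_domain TYPE('a)"
    and "DK_condition TYPE('a)"
    and "ideal_gen a = UNIV"
    and "ideal_gen b = UNIV"
  shows "ideal_gen (a * b) = UNIV"
proof -
  have B: "\<And>I::'a set. right_ideal I \<and> (\<exists>S. finite S \<and> I = right_ideal_gen S) \<longrightarrow> (\<exists>a. I = rprin a)"
     and BL: "\<And>I::'a set. left_ideal I \<and> (\<exists>S. finite S \<and> I = left_ideal_gen S) \<longrightarrow> (\<exists>a. I = lprin a)"
    using assms(1) unfolding bezout_domain_def by blast+
  have K: "\<And>x y z::'a. invariant x \<Longrightarrow> x = y * z \<Longrightarrow> invariant y \<and> invariant z"
    using assms(2) unfolding DK_condition_def komarnytsky_def by blast
  obtain c where c1: "ideal_gen (a*b) = rprin c" and c2: "ideal_gen (a*b) = lprin c"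
    using assms(2) unfolding DK_condition_def dubrovin_def by blast
  have zi: "two_sided_ideal ({0}::'a set)"
    unfolding two_sided_ideal_def right_ideal_def left_ideal_def by auto
  have a0: "a \<noteq> 0"
  proof
    assume "a = 0"
    then have "ideal_gen a \<subseteq> {0}" using gen_sub[OF zi] by auto
    moreover have "(1::'a) \<in> ideal_gen a" using assms(3) by simp
    ultimately show False by auto
  qed
  have b0: "b \<noteq> 0"
  proof
    assume "b = 0"
    then have "ideal_gen b \<subseteq> {0}" using gen_sub[OF zi] by auto
    moreover have "(1::'a) \<in> ideal_gen b" using assms(4) by simp
    ultimately show False by auto
  qed
  have abc: "a*b \<in> rprin c" using gen_mem c1 by metis
  have "c \<noteq> 0"
  proof
    assume "c = 0"
    then have "a*b = 0" using abc unfolding rprin_def by auto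
    then show False using a0 b0 by simp
  qed
  then have ic: "invariant c" using c1 c2 unfolding invariant_def by simp
  have Ic: "two_sided_ideal (rprin c)" using inv_ideal[OF ic] .
  have cmem: "c \<in> rprin c" unfolding rprin_def by (metis (mono_tags) mem_Collect_eq mult.right_neutral)
  obtain d where d: "left_ideal_gen {a, c} = lprin d"
    using BL[of "left_ideal_gen {a,c}"] lgen_ideal by (metis finite.emptyI finite.insertI)
  have "c \<in> lprin d" using d lgen_sup by blast
  then obtain u where "c = u * d" unfolding lprin_def by auto
  then have id: "invariant d" using K ic by blast
  have "a \<in> lprin d" using d lgen_sup by blast
  then have "a \<in> rprin d" using id invariant_def by blast
  then have "ideal_gen a \<subseteq> rprin d" using gen_sub inv_ideal[OF id] by blast
  then have "1 \<in> lprin d" using assms(3) id invariant_def by blast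
  then obtain r where r: "1 = r * d" unfolding lprin_def by auto
  have "d \<in> {x*a + y*c | x y. True}" using d lgen_sub unfolding lprin_def
    by (metis (mono_tags, lifting) mem_Collect_eq mult_1 subsetD)
  then obtain x y where "d = x*a + y*c" by auto
  then have L: "1 = (r*x)*a + (r*y)*c" using r by (simp add: distrib_left mult.assoc)
  obtain e where e: "right_ideal_gen {b, c} = rprin e"
    using B[of "right_ideal_gen {b,c}"] rgen_ideal by (metis finite.emptyI finite.insertI)
  have "c \<in> rprin e" using e rgen_sup by blast
  then obtain v where "c = e * v" unfolding rprin_def by auto
  then have ie: "invariant e" using K ic by blast
  have "b \<in> rprin e" using e rgen_sup by blast
  then have "ideal_gen b \<subseteq> rprin e" using gen_sub inv_ideal[OF ie] by blast
  then have "1 \<in> rprin e" using assms(4) by blast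
  then obtain s where s: "1 = e * s" unfolding rprin_def by auto
  have "e \<in> {b*x + c*y | x y. True}" using e rgen_sub unfolding rprin_def
    by (metis (mono_tags, lifting) mem_Collect_eq mult_1_right subsetD)
  then obtain z w where "e = b*z + c*w" by auto
  then have R: "1 = b*(z*s) + c*(w*s)" using s by (simp add: distrib_right mult.assoc)
  define p where "p = r*x" define q where "q = r*y" define z' where "z' = z*s" define w' where "w' = w*s"
  have L': "1 = p*a + q*c" using L p_def q_def by simp
  have R': "1 = b*z' + c*w'" using R z'_def w'_def by simp
  have "1 = (p*a + q*c) * (b*z' + c*w')" using L' R' by simp
  also have "\<dots> = p*(a*b)*z' + p*a*(c*w') + q*c*(b*z' + c*w')"
    by (simp add: algebra_simps)
  finally have one: "1 = p*(a*b)*z' + p*a*(c*w') + q*c*(b*z' + c*w')" .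
  have R1: "\<And>u v. u \<in> rprin c \<Longrightarrow> v * u \<in> rprin c" and R2: "\<And>u v. u \<in> rprin c \<Longrightarrow> u * v \<in> rprin c"
    and R3: "\<And>u v. u \<in> rprin c \<Longrightarrow> v \<in> rprin c \<Longrightarrow> u + v \<in> rprin c"
    using Ic unfolding two_sided_ideal_def right_ideal_def left_ideal_def by blast+
  have "p*(a*b)*z' \<in> rprin c" using abc R1 R2 by blast
  moreover have "p*a*(c*w') \<in> rprin c" using cmem R1 R2 by (metis mult.assoc)
  moreover have "q*c*(b*z' + c*w') \<in> rprin c" using cmem R1 R2 by blast
  ultimately have "1 \<in> rprin c" using one R3 by metis
  then have "\<And>t. t \<in> rprin c" using R2 by (metis mult_1)
  then show ?thesis using c1 by blast
qed

end
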